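(* Let $\mathbf{X}\subseteq\mathbb{R}_+^n$ be an interval and $\mathrm{IC}(\mathbf{a}_0,\dots,\mathbf{a}_{n-1})$ an interval circulant matrix containing $\hat A$. Then $\mathrm{IC}(\mathbf{a}_0,\dots,\mathbf{a}_{n-1})$ is weakly tolerance $\mathbf{X}$-robust, i.e. there exist $A\in\mathrm{IC}(\mathbf{a}_0,\dots,\mathbf{a}_{n-1})$ and $x\in\mathbf{X}$ with $x\in\mathrm{Attr}(A)$, if and only if the system $\lambda(\hat A)\hat A^{n^2}\otimes x=\hat A^{n^2+1}\otimes x$ has a solution $x\in\mathbf{X}$.
   Context: Max algebra on $\mathbb{R}_+$: $\oplus=\max$, ordinary product, $A^t$ max-algebraic power; $\lambda(A)$ greatest max-algebraic eigenvalue (maximum cycle geometric mean); $\mathrm{Attr}(A)=\{x\in\mathbb{R}_+^n: A^{t+1}\otimes x=\lambda(A)A^t\otimes x\text{ for some }t\ge0\}$. An interval $\mathbf{X}=\prod_i\mathbf{X}_i$ has each $\mathbf{X}_i\subseteq\mathbb{R}_+$ nonempty of one of the forms $[\underline{x}_i,\overline{x}_i]$, $(\underline{x}_i,\overline{x}_i)$, $(\underline{x}_i,\overline{x}_i]$, $[\underline{x}_i,\overline{x}_i)$. $\mathrm{Circ}(a_0,\dots,a_{n-1})$ has entries $A_{i,j}=a_t$, $t\equiv j-i\pmod n$; $\mathrm{IC}(\mathbf{a}_0,\dots,\mathbf{a}_{n-1})$ is the set of all $\mathrm{Circ}(a_0,\dots,a_{n-1})$ with $a_t\in\mathbf{a}_t$,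 each $\mathbf{a}_t\subseteq\mathbb{R}_+$ a nonempty interval of one of the four forms with endpoints $\underline a_t\le\overline a_t$. $\underline a=\max_k\underline a_k$, $\hat A=\mathrm{Circ}(\hat a_0,\dots,\hat a_{n-1})$, $\hat a_i=\min\{\underline a,\overline a_i\}$. *)

theory Defs
  imports Main "HOL-Library.Multiset" Complex_Main
begin

text \<open>Max algebra on nonnegative reals. Matrices of size n are functions
  nat => nat => real (only indices < n matter), vectors are nat => real.\<close>

definition mx_mult_vec :: "nat \<Rightarrow> (nat \<Rightarrow> nat \<Rightarrow> real) \<Rightarrow> (nat \<Rightarrow> real) \<Rightarrow> nat \<Rightarrow> real" where
  "mx_mult_vec n A x = (\<lambda>i. Max ((\<lambda>j. A i j * x j) ` {..<n}))"

definition mx_mult :: "nat \<Rightarrow> (nat \<Rightarrow> nat \<Rightarrow> real) \<Rightarrow> (nat \<Rightarrow> nat \<Rightarrow> real) \<Rightarrow> nat \<Rightarrow> nat \<Rightarrow> real" where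
  "mx_mult n A B = (\<lambda>i j. Max ((\<lambda>k. A i k * B k j) ` {..<n}))"

definition mx_id :: "nat \<Rightarrow> nat \<Rightarrow> real" where
  "mx_id = (\<lambda>i j. if i = j then 1 else 0)"

fun mx_pow :: "nat \<Rightarrow> (nat \<Rightarrow> nat \<Rightarrow> real) \<Rightarrow> nat \<Rightarrow> nat \<Rightarrow> nat \<Rightarrow> real" where
  "mx_pow n A 0 = mx_id"
| "mx_pow n A (Suc t) = mx_mult n A (mx_pow n A t)"

text \<open>Greatest max-algebraic eigenvalue = maximum cycle geometric mean
  (cycles given as index lists of length k, 1 <= k <= n).\<close>
definition mx_lambda :: "nat \<Rightarrow> (nat \<Rightarrow> nat \<Rightarrow> real) \<Rightarrow> real" where
  "mx_lambda n A = Max {root (length cs) (\<Prod>t<length cs. A (cs ! t) (cs ! ((t + 1) mod length cs)))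
      | cs. cs \<noteq> [] \<and> length cs \<le> n \<and> set cs \<subseteq> {..<n}}"

definition attr :: "nat \<Rightarrow> (nat \<Rightarrow> nat \<Rightarrow> real) \<Rightarrow> (nat \<Rightarrow> real) set" where
  "attr n A = {x. (\<forall>i<n. 0 \<le> x i) \<and>
     (\<exists>t. \<forall>i<n. mx_mult_vec n (mx_pow n A (Suc t)) x i
               = mx_lambda n A * mx_mult_vec n (mx_pow n A t) x i)}"

definition circ :: "nat \<Rightarrow> (nat \<Rightarrow> real) \<Rightarrow> nat \<Rightarrow> nat \<Rightarrow> real" where
  "circ n a = (\<lambda>i j. a ((j + n - i) mod n))"

definition itv :: "real \<Rightarrow> real \<Rightarrow> bool \<Rightarrow> bool \<Rightarrow> real set" where
  "itv l u cl cr = {x. (if cl then l \<le> x else l < x) \<and> (if cr then x \<le> u else x < u)}"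

definition nonneg_itv :: "real \<Rightarrow> real \<Rightarrow> bool \<Rightarrow> bool \<Rightarrow> bool" where
  "nonneg_itv l u cl cr \<longleftrightarrow> 0 \<le> l \<and> l \<le> u \<and> itv l u cl cr \<noteq> {}"

definition hat_a :: "nat \<Rightarrow> (nat \<Rightarrow> real) \<Rightarrow> (nat \<Rightarrow> real) \<Rightarrow> nat \<Rightarrow> real" where
  "hat_a n al au = (\<lambda>i. min (Max (al ` {..<n})) (au i))"

end

theory Submission
  imports Defs
begin


lemma max_ge': "j < (n::nat) \<Longrightarrow> (f j :: real) \<le> Max (f ` {..<n})"
  by (rule Max_ge) auto

lemma max_le': "0 < (n::nat) \<Longrightarrow> (\<forall>j<n. (f j :: real) \<le> b) \<Longrightarrow> Max (f ` {..<n}) \<le> b"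
  by (subst Max_le_iff) auto

lemma max_obtain: "0 < (n::nat) \<Longrightarrow> \<exists>j<n. Max (f ` {..<n}) = (f j :: real)"
proof -
  assume "0 < n"
  then have "Max (f ` {..<n}) \<in> f ` {..<n}" by (intro Max_in) auto
  then show ?thesis by auto
qed

lemma max_scale:
  assumes "0 \<le> (c::real)" "0 < (n::nat)"
  shows "Max ((\<lambda>j. c * f j) ` {..<n}) = c * Max (f ` {..<n})"
proof (rule antisym)
  show "Max ((\<lambda>j. c * f j) ` {..<n}) \<le> c * Max (f ` {..<n})"
    using assms by (intro max_le') (auto intro!: mult_left_mono max_ge')
  obtain j where j: "j < n" "Max (f ` {..<n}) = f j" using max_obtain[OF assms(2)] by blast
  show "c * Max (f ` {..<n}) \<le> Max ((\<lambda>j. c * f j) ` {..<n})"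
    using j by (auto intro: max_ge'[where f="\<lambda>j. c * f j"])
qed

definition cnt :: "nat \<Rightarrow> (nat \<Rightarrow> nat) \<Rightarrow> nat" where "cnt n c = (\<Sum>u<n. c u)"
definition ssum :: "nat \<Rightarrow> (nat \<Rightarrow> nat) \<Rightarrow> nat" where "ssum n c = (\<Sum>u<n. c u * u)"
definition wprod :: "nat \<Rightarrow> (nat \<Rightarrow> real) \<Rightarrow> (nat \<Rightarrow> nat) \<Rightarrow> real" where
  "wprod n w c = (\<Prod>u<n. w u ^ c u)"

lemma upd_add:
  assumes "u < n"
  shows "cnt n (c(u := c u + d)) = cnt n c + d"
    "ssum n (c(u := c u + d)) = ssum n c + d * u"
    "wprod n w (c(u := c u + d)) = w u ^ d * wprod n w c"
proof -
  have "cnt n (c(u := c u + d)) = (\<Sum>x<n. c x + (if x = u then d else 0))"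
    unfolding cnt_def by (rule sum.cong) auto
  also have "\<dots> = cnt n c + d" using assms by (simp add: sum.distrib cnt_def)
  finally show "cnt n (c(u := c u + d)) = cnt n c + d" .
  have "ssum n (c(u := c u + d)) = (\<Sum>x<n. c x * x + (if x = u then d * u else 0))"
    unfolding ssum_def by (rule sum.cong) (auto simp: algebra_simps)
  also have "\<dots> = ssum n c + d * u" using assms by (simp add: sum.distrib ssum_def)
  finally show "ssum n (c(u := c u + d)) = ssum n c + d * u" .
  have "wprod n w (c(u := c u + d)) = (\<Prod>x<n. w x ^ c x * (if x = u then w u ^ d else 1))"
    unfolding wprod_def by (rule prod.cong) (auto simp: power_add)
  also have "\<dots> = w u ^ d * wprod n w c" using assms by (simp add: prod.distrib wprod_def)
  finally show "wprod n w (c(u := c u + d)) = w u ^ d * wprod n w c" .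
qed

lemma circ_idx: assumes "i < n" "l < (n::nat)" shows "(i + (l + n - i) mod n) mod n = l"
proof -
  have "(i + (l + n - i) mod n) mod n = (i + (l + n - i)) mod n" by (simp add: mod_add_right_eq)
  also have "i + (l + n - i) = l + n" using assms by simp
  finally show ?thesis using assms by simp
qed

lemma circ_entry: assumes "i < n" "u < n" shows "circ n w i ((i + u) mod n) = w u"
proof -
  have "((i + u) mod n + n - i) mod n = u"
  proof (cases "i + u < n")
    case True then show ?thesis using assms by simp
  next
    case False
    then have "(i + u) mod n = i + u - n" using assms by (simp add: le_mod_geq)
    then show ?thesis using assms False by simp
  qed
  then show ?thesis by (simp add: circ_def)
qed

lemma pow_nonneg:
  assumes "0 < n" "\<forall>u<n. 0 \<le> w u"
  shows "0 \<le> mx_pow n (circ n w) k i j"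
proof (induction k arbitrary: i j)
  case 0 then show ?case by (simp add: mx_id_def)
next
  case (Suc k)
  have "0 \<le> circ n w i 0 * mx_pow n (circ n w) k 0 j"
    using assms Suc by (auto simp: circ_def intro!: mult_nonneg_nonneg)
  also have "\<dots> \<le> mx_pow n (circ n w) (Suc k) i j"
    using assms by (simp add: mx_mult_def max_ge'[where f="\<lambda>l. circ n w i l * mx_pow n (circ n w) k l j"])
  finally show ?case .
qed

lemma L1:
  assumes n: "0 < n" and w: "\<forall>u<n. 0 \<le> w u"
  shows "i < n \<Longrightarrow> cnt n c = k \<Longrightarrow> wprod n w c \<le> mx_pow n (circ n w) k i ((i + ssum n c) mod n)"
proof (induction k arbitrary: i c)
  case 0
  then have "\<forall>u<n. c u = 0" by (simp add: cnt_def)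
  then have "wprod n w c = 1" "ssum n c = 0" by (simp_all add: wprod_def ssum_def)
  then show ?case using 0 by (simp add: mx_id_def)
next
  case (Suc k)
  obtain u where u: "u < n" "c u > 0"
  proof (rule ccontr)
    assume "\<not> thesis"
    then have "\<forall>u<n. c u = 0" using that by auto
    then have "cnt n c = 0" by (simp add: cnt_def)
    then show False using Suc by simp
  qed
  define c' where "c' = c(u := c u - 1)"
  have cc: "c = c'(u := c' u + 1)" using u by (auto simp: c'_def)
  have "cnt n c = Suc (cnt n c')" using upd_add(1)[OF u(1), where c=c' and d=1] cc by simp
  then have cnt': "cnt n c' = k" using Suc.prems by simp
  define l where "l = (i + u) mod n"
  have l: "l < n" using n by (simp add: l_def)
  have IH: "wprod n w c' \<le> mx_pow n (circ n w) k l ((l + ssum n c') mod n)"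
    using Suc.IH[OF l cnt'] .
  have "ssum n c = ssum n c' + u" using upd_add(2)[OF u(1), where c=c' and d=1] cc by simp
  then have "(i + ssum n c) mod n = (i + u + ssum n c') mod n" by (simp add: algebra_simps)
  also have "\<dots> = (l + ssum n c') mod n" by (simp add: l_def mod_add_left_eq)
  finally have tgt: "(l + ssum n c') mod n = (i + ssum n c) mod n" by simp
  have wc: "wprod n w c = w u * wprod n w c'" using upd_add(3)[OF u(1), where c=c' and d=1 and w=w] cc by simp
  have "wprod n w c \<le> w u * mx_pow n (circ n w) k l ((i + ssum n c) mod n)"
    using wc IH tgt w u by (simp add: mult_left_mono)
  also have "\<dots> = circ n w i l * mx_pow n (circ n w) k l ((i + ssum n c) mod n)"
    using circ_entry[OF Suc.prems(1) u(1)] by (simp add: l_def)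
  also have "\<dots> \<le> mx_pow n (circ n w) (Suc k) i ((i + ssum n c) mod n)"
    using l by (simp add: mx_mult_def max_ge'[where f="\<lambda>l. circ n w i l * mx_pow n (circ n w) k l _"])
  finally show ?case .
qed

lemma L2:
  assumes n: "0 < n" and w: "\<forall>u<n. 0 \<le> w u"
  shows "i < n \<Longrightarrow> j < n \<Longrightarrow> mx_pow n (circ n w) k i j = 0 \<or>
    (\<exists>c. cnt n c = k \<and> (i + ssum n c) mod n = j \<and> mx_pow n (circ n w) k i j = wprod n w c)"
proof (induction k arbitrary: i j)
  case 0
  show ?case
  proof (cases "i = j")
    case True
    then show ?thesis using 0 by (intro disjI2 exI[of _ "\<lambda>_. 0"]) (simp add: cnt_def ssum_def wprod_def mx_id_def)
  qed (simp add: mx_id_def)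
next
  case (Suc k)
  obtain l where l: "l < n" "mx_pow n (circ n w) (Suc k) i j = circ n w i l * mx_pow n (circ n w) k l j"
    using max_obtain[OF n, of "\<lambda>l. circ n w i l * mx_pow n (circ n w) k l j"] by (auto simp: mx_mult_def)
  show ?case
  proof (cases "mx_pow n (circ n w) k l j = 0")
    case True then show ?thesis using l by simp
  next
    case False
    then obtain c' where c': "cnt n c' = k" "(l + ssum n c') mod n = j" "mx_pow n (circ n w) k l j = wprod n w c'"
      using Suc.IH[OF l(1) Suc.prems(2)] by blast
    define u where "u = (l + n - i) mod n"
    have u: "u < n" using n by (simp add: u_def)
    have ci: "circ n w i l = w u" by (simp add: circ_def u_def)
    have il: "(i + u) mod n = l" using circ_idx[OF Suc.prems(1) l(1)] by (simp add: u_def)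
    define c where "c = c'(u := c' u + 1)"
    have "cnt n c = Suc k" using upd_add(1)[OF u, where c=c' and d=1] c' by (simp add: c_def)
    moreover have "(i + ssum n c) mod n = j"
    proof -
      have "ssum n c = ssum n c' + u" using upd_add(2)[OF u, where c=c' and d=1] by (simp add: c_def)
      then have "(i + ssum n c) mod n = (i + u + ssum n c') mod n" by (simp add: algebra_simps)
      also have "\<dots> = ((i + u) mod n + ssum n c') mod n" by (simp add: mod_add_left_eq)
      finally have "(i + ssum n c) mod n = ((i + u) mod n + ssum n c') mod n" .
      then show ?thesis using il c' by simp
    qed
    moreover have "mx_pow n (circ n w) (Suc k) i j = wprod n w c"
      using upd_add(3)[OF u, where c=c' and d=1 and w=w] l ci c' by (simp add: c_def)
    ultimately show ?thesis by blast
  qed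
qed



lemma lambda_circ:
  assumes n: "0 < n" and w: "\<forall>u<n. 0 \<le> w u"
  shows "mx_lambda n (circ n w) = Max (w ` {..<n})"
proof -
  define M where "M = Max (w ` {..<n})"
  define g where "g = (\<lambda>cs. root (length cs) (\<Prod>t<length cs. circ n w (cs ! t) (cs ! ((t + 1) mod length cs))))"
  define Cs where "Cs = {cs. set cs \<subseteq> {..<n} \<and> length cs \<le> n \<and> cs \<noteq> []}"
  have S: "{root (length cs) (\<Prod>t<length cs. circ n w (cs ! t) (cs ! ((t + 1) mod length cs)))
      | cs. cs \<noteq> [] \<and> length cs \<le> n \<and> set cs \<subseteq> {..<n}} = g ` Cs"
    unfolding g_def Cs_def by auto
  have fin: "finite Cs"
    by (rule finite_subset[OF _ finite_lists_length_le[OF finite_lessThan[of n], of n]]) (auto simp: Cs_def)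
  have entry: "0 \<le> circ n w a b \<and> circ n w a b \<le> M" for a b
  proof -
    have "(b + n - a) mod n < n" using n by simp
    then show ?thesis using w by (auto simp: circ_def M_def intro: max_ge')
  qed
  have M0: "0 \<le> M" using entry by (meson order_trans)
  obtain u where u: "u < n" "M = w u" using max_obtain[OF n, of w] by (auto simp: M_def)
  define cs where "cs = map (\<lambda>t. (t * u) mod n) [0..<n]"
  have cs: "cs \<in> Cs" using n by (auto simp: cs_def Cs_def)
  have "g cs = M"
  proof -
    have "circ n w (cs ! t) (cs ! ((t + 1) mod length cs)) = w u" if t: "t < n" for t
    proof -
      have "cs ! ((t + 1) mod length cs) = (((t + 1) mod n) * u) mod n"
        using n by (simp add: cs_def)
      also have "\<dots> = ((t + 1) * u) mod n" by (rule mod_mult_left_eq)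
      also have "\<dots> = (t * u + u) mod n" by (simp add: algebra_simps)
      also have "\<dots> = ((t * u) mod n + u) mod n" by (simp add: mod_add_left_eq)
      finally show ?thesis using circ_entry[of "(t*u) mod n" n u w] t n u by (simp add: cs_def)
    qed
    then have "(\<Prod>t<length cs. circ n w (cs ! t) (cs ! ((t + 1) mod length cs))) = w u ^ n"
      by (simp add: cs_def)
    then show ?thesis using n u M0 by (simp add: g_def cs_def real_root_power_cancel)
  qed
  have "Max (g ` Cs) = M"
  proof (rule antisym)
    show "Max (g ` Cs) \<le> M"
    proof (subst Max_le_iff)
      show "finite (g ` Cs)" using fin by simp
      show "g ` Cs \<noteq> {}" using cs by auto
      show "\<forall>a\<in>g ` Cs. a \<le> M"
      proof
        fix a assume "a \<in> g ` Cs"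
        then obtain xs where xs: "xs \<in> Cs" "a = g xs" by auto
        have L: "0 < length xs" using xs by (auto simp: Cs_def)
        have "(\<Prod>t<length xs. circ n w (xs ! t) (xs ! ((t + 1) mod length xs))) \<le> (\<Prod>t<length xs. M)"
          by (rule prod_mono) (use entry in auto)
        then have "a \<le> root (length xs) (M ^ length xs)" using xs L by (simp add: g_def)
        then show "a \<le> M" using L M0 by (simp add: real_root_power_cancel)
      qed
    qed
    show "M \<le> Max (g ` Cs)" using \<open>g cs = M\<close> cs fin by (metis Max_ge finite_imageI imageI)
  qed
  then show ?thesis using S by (simp add: mx_lambda_def M_def)
qed

abbreviation mv where "mv n P y \<equiv> mx_mult_vec n P y"

lemma mvec_cong: "(\<forall>j<n. y j = y' j) \<Longrightarrow> mx_mult_vec n P y i = mx_mult_vec n P y' i"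
  unfolding mx_mult_vec_def by (intro arg_cong[where f=Max] image_cong) auto

lemma mvec_cong_mat: "(\<forall>j<n. P i j = P' i j) \<Longrightarrow> mx_mult_vec n P y i = mx_mult_vec n P' y i"
  unfolding mx_mult_vec_def by (intro arg_cong[where f=Max] image_cong) auto

lemma mvec_scale:
  assumes "0 \<le> c" "0 < n"
  shows "mx_mult_vec n P (\<lambda>j. c * y j) i = c * mx_mult_vec n P y i"
  using max_scale[OF assms, of "\<lambda>j. P i j * y j"] by (simp add: mx_mult_vec_def algebra_simps)

lemma mvec_scale_mat:
  assumes "0 \<le> c" "0 < n" "\<forall>j<n. P' i j = c * P i j"
  shows "mx_mult_vec n P' y i = c * mx_mult_vec n P y i"
proof -
  have "mx_mult_vec n P' y i = Max ((\<lambda>j. c * (P i j * y j)) ` {..<n})"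
    unfolding mx_mult_vec_def using assms(3) by (intro arg_cong[where f=Max] image_cong) auto
  then show ?thesis using max_scale[OF assms(1,2), of "\<lambda>j. P i j * y j"] by (simp add: mx_mult_vec_def)
qed

lemma mvec_mono:
  assumes "0 < n" "\<forall>j<n. 0 \<le> P i j" "\<forall>j<n. y j \<le> y' j"
  shows "mx_mult_vec n P y i \<le> mx_mult_vec n P y' i"
  unfolding mx_mult_vec_def using assms
  by (intro max_le') (auto intro: order_trans[OF mult_left_mono max_ge'[where f="\<lambda>j. P i j * y' j"]])

lemma mvec_nonneg:
  assumes "0 < n" "\<forall>j<n. 0 \<le> P i j" "\<forall>j<n. 0 \<le> y j"
  shows "0 \<le> mx_mult_vec n P y i"
proof -
  have "0 \<le> P i 0 * y 0" using assms by simp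
  also have "\<dots> \<le> mx_mult_vec n P y i" unfolding mx_mult_vec_def using assms by (intro max_ge') auto
  finally show ?thesis .
qed

lemma mvec_ge: "j < n \<Longrightarrow> P i j * y j \<le> mx_mult_vec n P y i"
  unfolding mx_mult_vec_def by (rule max_ge')

lemma mvec_id: "0 < n \<Longrightarrow> i < n \<Longrightarrow> 0 \<le> y i \<Longrightarrow> mx_mult_vec n mx_id y i = y i"
  unfolding mx_mult_vec_def mx_id_def
  by (intro antisym max_le') (auto intro: max_ge'[where f="\<lambda>j. (if i = j then 1 else 0) * y j", of i, simplified])

lemma mvec_assoc:
  assumes n: "0 < n" and A: "\<forall>l<n. 0 \<le> A i l" and P: "\<forall>l<n. \<forall>k<n. 0 \<le> P l k" and x: "\<forall>k<n. 0 \<le> x k"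
  shows "mx_mult_vec n (mx_mult n A P) x i = mx_mult_vec n A (mx_mult_vec n P x) i"
proof (rule antisym)
  show "mx_mult_vec n (mx_mult n A P) x i \<le> mx_mult_vec n A (mx_mult_vec n P x) i"
    unfolding mx_mult_vec_def[of n "mx_mult n A P"]
  proof (intro max_le'[OF n] allI impI)
    fix k assume k: "k < n"
    obtain l where l: "l < n" "mx_mult n A P i k = A i l * P l k"
      using max_obtain[OF n, of "\<lambda>l. A i l * P l k"] by (auto simp: mx_mult_def)
    have "mx_mult n A P i k * x k = A i l * (P l k * x k)" using l by simp
    also have "\<dots> \<le> A i l * mx_mult_vec n P x l" using A l k by (intro mult_left_mono mvec_ge) auto
    also have "\<dots> \<le> mx_mult_vec n A (mx_mult_vec n P x) i" using l(1) by (rule mvec_ge)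
    finally show "mx_mult n A P i k * x k \<le> mx_mult_vec n A (mx_mult_vec n P x) i" .
  qed
  show "mx_mult_vec n A (mx_mult_vec n P x) i \<le> mx_mult_vec n (mx_mult n A P) x i"
    unfolding mx_mult_vec_def[of n A]
  proof (intro max_le'[OF n] allI impI)
    fix l assume l: "l < n"
    obtain k where k: "k < n" "mx_mult_vec n P x l = P l k * x k"
      using max_obtain[OF n, of "\<lambda>k. P l k * x k"] by (auto simp: mx_mult_vec_def)
    have "A i l * mx_mult_vec n P x l = (A i l * P l k) * x k" using k by simp
    also have "\<dots> \<le> mx_mult n A P i k * x k"
      using x k l unfolding mx_mult_def by (intro mult_right_mono max_ge') auto
    also have "\<dots> \<le> mx_mult_vec n (mx_mult n A P) x i" using k(1) by (rule mvec_ge)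
    finally show "A i l * mx_mult_vec n P x l \<le> mx_mult_vec n (mx_mult n A P) x i" .
  qed
qed



lemma circ_nonneg: "0 < n \<Longrightarrow> \<forall>u<n. 0 \<le> w u \<Longrightarrow> 0 \<le> circ n w i l"
  by (simp add: circ_def)

lemma wprod_nonneg: "\<forall>u<n. 0 \<le> w u \<Longrightarrow> 0 \<le> wprod n w c"
  unfolding wprod_def by (rule prod_nonneg) auto

lemma pv_nonneg:
  assumes "0 < n" "\<forall>u<n. 0 \<le> w u" "\<forall>j<n. 0 \<le> y j"
  shows "0 \<le> mx_mult_vec n (mx_pow n (circ n w) k) y i"
  using assms by (intro mvec_nonneg pow_nonneg allI impI) auto

lemma pv_suc:
  assumes "0 < n" "\<forall>u<n. 0 \<le> w u" "\<forall>j<n. 0 \<le> y j"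
  shows "mx_mult_vec n (mx_pow n (circ n w) (Suc k)) y i
     = mx_mult_vec n (circ n w) (\<lambda>j. mx_mult_vec n (mx_pow n (circ n w) k) y j) i"
  using assms by (simp add: mvec_assoc circ_nonneg pow_nonneg)

lemma pv_add:
  assumes n: "0 < n" and w: "\<forall>u<n. 0 \<le> w u" and y: "\<forall>j<n. 0 \<le> y j"
  shows "i < n \<Longrightarrow> mx_mult_vec n (mx_pow n (circ n w) (M + k)) y i
     = mx_mult_vec n (mx_pow n (circ n w) M) (\<lambda>j. mx_mult_vec n (mx_pow n (circ n w) k) y j) i"
proof (induction M arbitrary: i)
  case 0
  then show ?case using n w y by (simp add: mvec_id pv_nonneg)
next
  case (Suc M)
  have "mx_mult_vec n (mx_pow n (circ n w) (Suc M + k)) y i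
      = mx_mult_vec n (circ n w) (\<lambda>j. mx_mult_vec n (mx_pow n (circ n w) (M + k)) y j) i"
    using pv_suc[OF n w y, of "M + k" i] by simp
  also have "\<dots> = mx_mult_vec n (circ n w) (\<lambda>j. mx_mult_vec n (mx_pow n (circ n w) M)
       (\<lambda>j. mx_mult_vec n (mx_pow n (circ n w) k) y j) j) i"
    using Suc.IH by (intro mvec_cong) auto
  also have "\<dots> = mx_mult_vec n (mx_pow n (circ n w) (Suc M))
       (\<lambda>j. mx_mult_vec n (mx_pow n (circ n w) k) y j) i"
    using pv_suc[OF n w, of "\<lambda>j. mx_mult_vec n (mx_pow n (circ n w) k) y j" M i] n w y
    by (simp add: pv_nonneg)
  finally show ?case .
qed

lemma period:
  assumes n: "0 < n" and w: "\<forall>u<n. 0 \<le> w u \<and> w u \<le> M" and u0: "u0 < n" "w u0 = M"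
    and L: "n * n \<le> L" and ij: "i < n" "j < n"
  shows "mx_pow n (circ n w) (L + n) i j = M ^ n * mx_pow n (circ n w) L i j"
proof -
  have w0: "\<forall>u<n. 0 \<le> w u" using w by auto
  have M0: "0 \<le> M" using w u0 by auto
  let ?P = "mx_pow n (circ n w)"
  show ?thesis
  proof (rule antisym)
    show "?P (L + n) i j \<le> M ^ n * ?P L i j"
    proof (cases "?P (L + n) i j = 0")
      case True then show ?thesis using M0 pow_nonneg[OF n w0] by simp
    next
      case False
      then obtain c where c: "cnt n c = L + n" "(i + ssum n c) mod n = j" "?P (L + n) i j = wprod n w c"
        using L2[OF n w0 ij] by blast
      obtain u where u: "u < n" "n \<le> c u"
      proof (rule ccontr)
        assume "\<not> thesis"
        then have "\<forall>u\<in>{..<n}. c u \<le> n - 1" using that by force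
        then have "cnt n c \<le> (\<Sum>u<n. n - 1)" unfolding cnt_def by (intro sum_mono) auto
        then have "L + n \<le> n * (n - 1)" using c by simp
        moreover have "n * (n - 1) \<le> n * n" by simp
        ultimately show False using L n by linarith
      qed
      define c' where "c' = c(u := c u - n)"
      have cc: "c = c'(u := c' u + n)" using u by (auto simp: c'_def)
      have "cnt n c = cnt n c' + n" using upd_add(1)[OF u(1), where c=c' and d=n] cc by simp
      then have cnt': "cnt n c' = L" using c by simp
      have "ssum n c = ssum n c' + n * u" using upd_add(2)[OF u(1), where c=c' and d=n] cc by simp
      then have tgt: "(i + ssum n c') mod n = j" using c(2) by (simp add: add.assoc[symmetric])
      have "wprod n w c = w u ^ n * wprod n w c'" using upd_add(3)[OF u(1), where c=c' and d=n and w=w] cc by simp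
      also have "\<dots> \<le> M ^ n * wprod n w c'"
        using w u wprod_nonneg[OF w0] by (intro mult_right_mono power_mono) auto
      also have "\<dots> \<le> M ^ n * ?P L i j"
        using L1[OF n w0 ij(1) cnt'] tgt M0 by (intro mult_left_mono) auto
      finally show ?thesis using c by simp
    qed
    show "M ^ n * ?P L i j \<le> ?P (L + n) i j"
    proof (cases "?P L i j = 0")
      case True then show ?thesis using pow_nonneg[OF n w0] by simp
    next
      case False
      then obtain c where c: "cnt n c = L" "(i + ssum n c) mod n = j" "?P L i j = wprod n w c"
        using L2[OF n w0 ij] by blast
      define c2 where "c2 = c(u0 := c u0 + n)"
      have "cnt n c2 = L + n" using upd_add(1)[OF u0(1), where c=c and d=n] c by (simp add: c2_def)
      moreover have "(i + ssum n c2) mod n = j"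
        using upd_add(2)[OF u0(1), where c=c and d=n] c by (simp add: c2_def add.assoc[symmetric])
      moreover have "wprod n w c2 = M ^ n * wprod n w c"
        using upd_add(3)[OF u0(1), where c=c and d=n and w=w] u0 by (simp add: c2_def)
      ultimately show ?thesis using L1[OF n w0 ij(1), of c2] c by simp
    qed
  qed
qed



theorem theorem4:
  fixes n :: nat
    and xl xu :: "nat \<Rightarrow> real" and xcl xcr :: "nat \<Rightarrow> bool"
    and al au :: "nat \<Rightarrow> real" and acl acr :: "nat \<Rightarrow> bool"
  assumes n: "n \<ge> 1"
    and X: "\<forall>i<n. nonneg_itv (xl i) (xu i) (xcl i) (xcr i)"
    and IC: "\<forall>t<n. nonneg_itv (al t) (au t) (acl t) (acr t)"
    and hat_in: "\<forall>t<n. hat_a n al au t \<in> itv (al t) (au t) (acl t) (acr t)"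
  shows "(\<exists>a x. (\<forall>t<n. a t \<in> itv (al t) (au t) (acl t) (acr t))
               \<and> (\<forall>i<n. x i \<in> itv (xl i) (xu i) (xcl i) (xcr i))
               \<and> x \<in> attr n (circ n a))
     \<longleftrightarrow>
         (\<exists>x. (\<forall>i<n. x i \<in> itv (xl i) (xu i) (xcl i) (xcr i))
              \<and> (\<forall>i<n. mx_lambda n (circ n (hat_a n al au))
                         * mx_mult_vec n (mx_pow n (circ n (hat_a n al au)) (n^2)) x i
                       = mx_mult_vec n (mx_pow n (circ n (hat_a n al au)) (n^2 + 1)) x i))"
proof -
  have n0: "0 < n" using n by simp
  have itv_ge: "l \<le> y" if "y \<in> itv l u cl cr" for y l u cl cr
    using that by (auto simp: itv_def split: if_splits)
  have itv_le: "y \<le> u" if "y \<in> itv l u cl cr" for y l u cl cr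
    using that by (auto simp: itv_def split: if_splits)
  define ub where "ub = Max (al ` {..<n})"
  define h where "h = hat_a n al au"
  have al0: "\<forall>t<n. 0 \<le> al t \<and> al t \<le> au t" using IC by (auto simp: nonneg_itv_def)
  obtain k0 where k0: "k0 < n" "ub = al k0" using max_obtain[OF n0, of al] by (auto simp: ub_def)
  have ub0: "0 \<le> ub" using k0 al0 by auto
  have alub: "\<forall>t<n. al t \<le> ub" unfolding ub_def by (auto intro: max_ge')
  have h_def': "h t = min ub (au t)" for t by (simp add: h_def hat_a_def ub_def)
  have h0: "\<forall>u<n. 0 \<le> h u \<and> h u \<le> ub" using al0 ub0 by (auto simp: h_def')
  have hk0: "h k0 = ub" using al0 k0 by (auto simp: h_def')
  have Maxh: "Max (h ` {..<n}) = ub"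
  proof (rule antisym)
    show "Max (h ` {..<n}) \<le> ub" using h0 by (intro max_le'[OF n0]) auto
    show "ub \<le> Max (h ` {..<n})" using max_ge'[OF k0(1), of h] hk0 by simp
  qed
  have lamh: "mx_lambda n (circ n h) = ub"
    using lambda_circ[OF n0, of h] h0 Maxh by simp
  have Xnn: "0 \<le> x i" if "\<forall>i<n. x i \<in> itv (xl i) (xu i) (xcl i) (xcr i)" "i < n" for x i
    using that X itv_ge[of "x i"] by (force simp: nonneg_itv_def)
  show ?thesis
  proof
    assume "\<exists>x. (\<forall>i<n. x i \<in> itv (xl i) (xu i) (xcl i) (xcr i))
              \<and> (\<forall>i<n. mx_lambda n (circ n (hat_a n al au))
                         * mx_mult_vec n (mx_pow n (circ n (hat_a n al au)) (n^2)) x i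
                       = mx_mult_vec n (mx_pow n (circ n (hat_a n al au)) (n^2 + 1)) x i)"
    then obtain x where x: "\<forall>i<n. x i \<in> itv (xl i) (xu i) (xcl i) (xcr i)"
      "\<forall>i<n. mx_lambda n (circ n h) * mx_mult_vec n (mx_pow n (circ n h) (n^2)) x i
                       = mx_mult_vec n (mx_pow n (circ n h) (n^2 + 1)) x i" by (auto simp: h_def)
    have "x \<in> attr n (circ n h)"
      unfolding attr_def using x Xnn[OF x(1)] by (auto intro!: exI[of _ "n^2"])
    then show "\<exists>a x. (\<forall>t<n. a t \<in> itv (al t) (au t) (acl t) (acr t))
               \<and> (\<forall>i<n. x i \<in> itv (xl i) (xu i) (xcl i) (xcr i))
               \<and> x \<in> attr n (circ n a)"
      using hat_in x(1) by (auto simp: h_def)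
  next
    assume "\<exists>a x. (\<forall>t<n. a t \<in> itv (al t) (au t) (acl t) (acr t))
               \<and> (\<forall>i<n. x i \<in> itv (xl i) (xu i) (xcl i) (xcr i))
               \<and> x \<in> attr n (circ n a)"
    then obtain a x where a: "\<forall>t<n. a t \<in> itv (al t) (au t) (acl t) (acr t)"
      and xX: "\<forall>i<n. x i \<in> itv (xl i) (xu i) (xcl i) (xcr i)" and xA: "x \<in> attr n (circ n a)"
      by blast
    have x0: "\<forall>j<n. 0 \<le> x j" using Xnn[OF xX] by auto
    let ?H = "mx_pow n (circ n h)"
    let ?Hv = "\<lambda>k i. mx_mult_vec n (?H k) x i"
    have key: "ub * ?Hv (n^2) i = ?Hv (n^2 + 1) i" if i: "i < n" for i
    proof (cases "ub = 0")
      case True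
      have zmax: "Max ((\<lambda>_::nat. 0::real) ` {..<n}) = 0"
      proof (rule antisym)
        show "Max ((\<lambda>_::nat. 0::real) ` {..<n}) \<le> 0" by (rule max_le'[OF n0]) simp
        show "0 \<le> Max ((\<lambda>_::nat. 0::real) ` {..<n})" using max_ge'[OF n0, of "\<lambda>_. 0::real"] by simp
      qed
      have "?H (Suc k) i' j = 0" for k i' j
      proof -
        have "\<forall>l<n. circ n h i' l = 0"
        proof (intro allI impI)
          fix l assume "l < n"
          have "(l + n - i') mod n < n" using n0 by simp
          then show "circ n h i' l = 0" using h0 True by (force simp: circ_def)
        qed
        then have "mx_mult n (circ n h) (?H k) i' j = Max ((\<lambda>l. 0) ` {..<n})"
          unfolding mx_mult_def by (intro arg_cong[where f=Max] image_cong) auto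
        then show ?thesis using zmax by simp
      qed
      then have "?Hv (n^2 + 1) i = Max ((\<lambda>j. 0) ` {..<n})"
        unfolding mx_mult_vec_def by simp
      then show ?thesis using True zmax by simp
    next
      case False
      then have ubp: "0 < ub" using ub0 by simp
      define lam where "lam = Max (a ` {..<n})"
      have a0: "\<forall>u<n. 0 \<le> a u \<and> al u \<le> a u \<and> a u \<le> au u"
        using a al0 itv_ge itv_le by (meson order_trans)
      have alam: "\<forall>u<n. a u \<le> lam" unfolding lam_def by (auto intro: max_ge')
      have ub_lam: "ub \<le> lam" using k0 a0 alam by (metis order_trans)
      have lamp: "0 < lam" using ubp ub_lam by simp
      have lama: "mx_lambda n (circ n a) = lam"
        using lambda_circ[OF n0, of a] a0 by (simp add: lam_def)
      obtain u0 where u0: "u0 < n" "a u0 = lam" using max_obtain[OF n0, of a] by (auto simp: lam_def)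
      define r where "r = ub / lam"
      have r0: "0 \<le> r" "r \<le> 1" using ub0 lamp ub_lam by (auto simp: r_def)
      have rlam: "r * lam = ub" using lamp by (simp add: r_def)
      have hr: "\<forall>u<n. r * a u \<le> h u"
      proof (intro allI impI)
        fix u assume u: "u < n"
        show "r * a u \<le> h u"
        proof (cases "ub \<le> au u")
          case True
          have "r * a u \<le> r * lam" using r0 alam u by (simp add: mult_left_mono)
          then show ?thesis using True rlam by (simp add: h_def')
        next
          case False
          have "r * a u \<le> 1 * a u" using r0 a0 u by (intro mult_right_mono) auto
          moreover have "a u \<le> au u" using a0 u by blast
          ultimately show ?thesis using False by (simp add: h_def')
        qed
      qed
      have aw: "\<forall>u<n. 0 \<le> a u" using a0 by auto
      have hw: "\<forall>u<n. 0 \<le> h u" using h0 by auto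
      let ?A = "mx_pow n (circ n a)"
      let ?Av = "\<lambda>k i. mx_mult_vec n (?A k) x i"
      obtain t where t: "\<forall>i<n. ?Av (Suc t) i = lam * ?Av t i"
        using xA lama by (auto simp: attr_def)
      have S1: "\<forall>i<n. ?Av (t + m) i = lam ^ m * ?Av t i" for m
      proof (induction m)
        case 0 then show ?case by simp
      next
        case (Suc m)
        show ?case
        proof (intro allI impI)
          fix i assume i: "i < n"
          have "?Av (t + Suc m) i = mx_mult_vec n (circ n a) (\<lambda>j. ?Av (t + m) j) i"
            using pv_suc[OF n0 aw x0, of "t + m" i] by simp
          also have "\<dots> = mx_mult_vec n (circ n a) (\<lambda>j. lam ^ m * ?Av t j) i"
            using Suc.IH by (intro mvec_cong) auto
          also have "\<dots> = lam ^ m * mx_mult_vec n (circ n a) (\<lambda>j. ?Av t j) i"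
            using lamp n0 by (intro mvec_scale) auto
          also have "\<dots> = lam ^ m * ?Av (Suc t) i"
            using pv_suc[OF n0 aw x0, of t i] by simp
          finally show "?Av (t + Suc m) i = lam ^ Suc m * ?Av t i" using t i by simp
        qed
      qed
      have S2: "lam ^ (n * m) * x i \<le> ?Av (n * m) i" if i: "i < n" for m i
      proof -
        define c where "c = (\<lambda>_::nat. 0::nat)(u0 := 0 + n * m)"
        have "cnt n c = n * m" using upd_add(1)[OF u0(1), where c="\<lambda>_. 0" and d="n*m"]
          by (simp add: c_def cnt_def)
        moreover have "ssum n c = n * m * u0" using upd_add(2)[OF u0(1), where c="\<lambda>_. 0" and d="n*m"]
          by (simp add: c_def ssum_def)
        moreover have "wprod n a c = lam ^ (n * m)"
          using upd_add(3)[OF u0(1), where c="\<lambda>_. 0" and d="n*m" and w=a] u0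
          by (simp add: c_def wprod_def)
        ultimately have "lam ^ (n * m) \<le> ?A (n * m) i i"
          using L1[OF n0 aw i, of c "n * m"] i by (simp add: add.commute mult.assoc)
        then have "lam ^ (n * m) * x i \<le> ?A (n * m) i i * x i" using x0 i by (intro mult_right_mono) auto
        also have "\<dots> \<le> ?Av (n * m) i" using i by (rule mvec_ge)
        finally show ?thesis .
      qed
      have S3: "lam ^ k * x i \<le> ?Av k i" if k: "t \<le> k" and i: "i < n" for k i
      proof -
        have nk: "k \<le> n * k" using n by simp
        have s1: "t + (n * k - t) = n * k" using k nk by linarith
        have s2: "t + (k - t) = k" using k by linarith
        have s3: "n * k - t = (n * k - k) + (k - t)" using k nk by linarith
        have s4: "n * k = (n * k - k) + k" using nk by linarith
        have e1: "?Av (n * k) i = lam ^ (n * k - t) * ?Av t i"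
          using S1[of "n * k - t"] i unfolding s1 by blast
        have e2: "?Av k i = lam ^ (k - t) * ?Av t i" using S1[of "k - t"] i unfolding s2 by blast
        have p1: "lam ^ (n * k - t) = lam ^ (n * k - k) * lam ^ (k - t)"
          by (subst s3) (rule power_add)
        have p2: "lam ^ (n * k) = lam ^ (n * k - k) * lam ^ k"
          by (subst s4) (rule power_add)
        have "lam ^ (n * k - k) * (lam ^ k * x i) = lam ^ (n * k) * x i"
          unfolding p2 by (rule mult.assoc[symmetric])
        also have "\<dots> \<le> ?Av (n * k) i" using S2 i by blast
        also have "\<dots> = lam ^ (n * k - k) * ?Av k i"
          unfolding e1 e2 p1 by (rule mult.assoc)
        finally show ?thesis by (rule mult_left_le_imp_le) (use lamp in simp)
      qed
      have S4: "r ^ k * ?A k i j \<le> ?H k i j" if i: "i < n" and j: "j < n" for k i j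
      proof (cases "?A k i j = 0")
        case True then show ?thesis using pow_nonneg[OF n0 hw] by simp
      next
        case False
        then obtain c where c: "cnt n c = k" "(i + ssum n c) mod n = j" "?A k i j = wprod n a c"
          using L2[OF n0 aw i j] by blast
        have rk: "r ^ k = (\<Prod>u<n. r ^ c u)" using c(1) power_sum[of r c "{..<n}"] by (simp add: cnt_def)
        have "r ^ k * wprod n a c = (\<Prod>u<n. (r * a u) ^ c u)"
          unfolding rk wprod_def by (simp add: prod.distrib[symmetric] power_mult_distrib)
        also have "\<dots> \<le> wprod n h c"
          unfolding wprod_def using hr r0 aw by (intro prod_mono conjI power_mono) auto
        also have "\<dots> \<le> ?H k i j" using L1[OF n0 hw i c(1)] c(2) by simp
        finally show ?thesis using c by simp
      qed
      have S5: "ub ^ k * x i \<le> ?Hv k i" if k: "t \<le> k" and i: "i < n" for k i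
      proof -
        obtain j where j: "j < n" "?Av k i = ?A k i j * x j"
          using max_obtain[OF n0, of "\<lambda>j. ?A k i j * x j"] by (auto simp: mx_mult_vec_def)
        have "ub ^ k * x i = r ^ k * (lam ^ k * x i)" using rlam by (simp add: power_mult_distrib[symmetric])
        also have "\<dots> \<le> r ^ k * ?Av k i" using S3[OF k i] r0 by (simp add: mult_left_mono)
        also have "\<dots> = (r ^ k * ?A k i j) * x j" using j by simp
        also have "\<dots> \<le> ?H k i j * x j" using S4[OF i j(1)] x0 j by (intro mult_right_mono) auto
        also have "\<dots> \<le> ?Hv k i" using j(1) by (rule mvec_ge)
        finally show ?thesis .
      qed
      have S6: "ub ^ k * ?Hv M i \<le> ?Hv (M + k) i" if k: "t \<le> k" and i: "i < n" for M k i
      proof -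
        have "ub ^ k * ?Hv M i = mx_mult_vec n (?H M) (\<lambda>j. ub ^ k * x j) i"
          using ub0 n0 by (simp add: mvec_scale)
        also have "\<dots> \<le> mx_mult_vec n (?H M) (\<lambda>j. ?Hv k j) i"
          using S5[OF k] pow_nonneg[OF n0 hw] n0 by (intro mvec_mono) auto
        also have "\<dots> = ?Hv (M + k) i" using pv_add[OF n0 hw x0 i, of M k] by simp
        finally show ?thesis .
      qed
      have S7m: "?H (L + n * m) i j = ub ^ (n * m) * ?H L i j"
        if L: "n * n \<le> L" and i: "i < n" and j: "j < n" for L m i j
      proof (induction m)
        case 0 then show ?case by simp
      next
        case (Suc m)
        have "?H (L + n * Suc m) i j = ?H ((L + n * m) + n) i j" by (simp add: algebra_simps)
        also have "\<dots> = ub ^ n * ?H (L + n * m) i j"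
          by (rule period[where w=h and M=ub and ?u0.0=k0]) (use n0 h0 k0 hk0 L i j in auto)
        also have "\<dots> = ub ^ (n * Suc m) * ?H L i j" using Suc by (simp add: power_add algebra_simps)
        finally show ?case .
      qed
      have S7: "?Hv (L + n * m) i = ub ^ (n * m) * ?Hv L i" if L: "n * n \<le> L" and i: "i < n" for L m i
        using S7m[OF L i] ub0 n0 by (intro mvec_scale_mat) auto
      define N where "N = n * n"
      have N2: "n^2 = N" by (simp add: N_def power2_eq_square)
      have tn: "t \<le> n * t" using mult_le_mono1[OF n, of t] by simp
      have ge: "ub * ?Hv N i \<le> ?Hv (N + 1) i"
      proof -
        have "ub ^ (1 + n * t) * ?Hv N i \<le> ?Hv (N + (1 + n * t)) i"
          using S6[OF _ i, of "1 + n * t" N] tn by simp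
        also have "\<dots> = ?Hv ((N + 1) + n * t) i" by (simp add: add.assoc)
        also have "\<dots> = ub ^ (n * t) * ?Hv (N + 1) i" using S7[of "N + 1" i t] i by (simp add: N_def)
        finally have "ub ^ (n * t) * (ub * ?Hv N i) \<le> ub ^ (n * t) * ?Hv (N + 1) i"
          by (simp add: power_add mult.assoc mult.left_commute del: mx_pow.simps)
        then show ?thesis by (rule mult_left_le_imp_le) (use ubp in simp)
      qed
      have le: "?Hv (N + 1) i \<le> ub * ?Hv N i"
      proof -
        define k2 where "k2 = n * t + n - 1"
        have k2t: "t \<le> k2" unfolding k2_def using n tn by linarith
        have nt1: "n * (t + 1) = n * t + n" by simp
        have k2s: "Suc k2 = n * (t + 1)" unfolding k2_def nt1 using n by linarith
        have "ub ^ k2 * ?Hv (N + 1) i \<le> ?Hv ((N + 1) + k2) i" using S6[OF k2t i, of "N + 1"] by simp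
        also have "(N + 1) + k2 = N + n * (t + 1)" using k2s by simp
        also have "?Hv (N + n * (t + 1)) i = ub ^ (n * (t + 1)) * ?Hv N i" using S7[of N i "t + 1"] i by (simp add: N_def del: mx_pow.simps)
        also have "\<dots> = ub ^ k2 * (ub * ?Hv N i)" using k2s[symmetric] by (simp add: mult.assoc)
        finally show ?thesis by (rule mult_left_le_imp_le) (use ubp in simp)
      qed
      show ?thesis using ge le N2 by simp
    qed
    show "\<exists>x. (\<forall>i<n. x i \<in> itv (xl i) (xu i) (xcl i) (xcr i))
              \<and> (\<forall>i<n. mx_lambda n (circ n (hat_a n al au))
                         * mx_mult_vec n (mx_pow n (circ n (hat_a n al au)) (n^2)) x i
                       = mx_mult_vec n (mx_pow n (circ n (hat_a n al au)) (n^2 + 1)) x i)"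
      using xX key lamh by (auto simp: h_def)
  qed
qed

end
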